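(* Let $\rho$ be a density operator on a finite-dimensional Hilbert space, $H$ a Hermitian operator, and $\rho_\theta=e^{-i\theta H}\rho\,e^{i\theta H}$. Then $$\mathcal{I}(\rho_\theta)=\partial_\theta^2 D_{HS}(\rho,\rho_\theta)\Big|_{\theta=0},$$ where $D_{HS}(A,B)=\mathrm{Tr}[(A-B)^2]$.
   Context: The sub-QFI is $\mathcal{I}(\rho_\theta)=8\lim_{\delta\to 0}\frac{1-\sqrt{G(\rho_\theta,\rho_{\theta+\delta})}}{\delta^2}$, where for density operators $\rho,\sigma$ the super-fidelity is $G(\rho,\sigma)=\mathrm{Tr}[\rho\sigma]+\sqrt{(1-\mathrm{Tr}[\rho^2])(1-\mathrm{Tr}[\sigma^2])}$. *)

theory Defs
  imports "HOL-Analysis.Analysis"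
begin

definition cmat_adj :: "complex^'n^'n \<Rightarrow> complex^'n^'n" where
  "cmat_adj A = (\<chi> i j. cnj (A $ j $ i))"

definition hermitian :: "complex^'n^'n \<Rightarrow> bool" where
  "hermitian A \<longleftrightarrow> cmat_adj A = A"

definition positive_semidef :: "complex^'n^'n \<Rightarrow> bool" where
  "positive_semidef A \<longleftrightarrow> hermitian A \<and>
     (\<forall>v::complex^'n. 0 \<le> Re ((\<Sum>i\<in>UNIV. \<Sum>j\<in>UNIV. cnj (v $ i) * A $ i $ j * v $ j)))"

definition density_operator :: "complex^'n^'n \<Rightarrow> bool" where
  "density_operator \<rho> \<longleftrightarrow> positive_semidef \<rho> \<and> trace \<rho> = 1"

fun mpow :: "complex^'n^'n \<Rightarrow> nat \<Rightarrow> complex^'n^'n" where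
  "mpow A 0 = mat 1"
| "mpow A (Suc k) = A ** mpow A k"

definition mexp :: "complex^'n^'n \<Rightarrow> complex^'n^'n" where
  "mexp A = (\<Sum>k. (1 / fact k :: real) *\<^sub>R mpow A k)"

definition cscale :: "complex \<Rightarrow> complex^'n^'n \<Rightarrow> complex^'n^'n" where
  "cscale c A = (\<chi> i j. c * A $ i $ j)"

definition rot_state :: "complex^'n^'n \<Rightarrow> complex^'n^'n \<Rightarrow> real \<Rightarrow> complex^'n^'n" where
  "rot_state \<rho> H \<theta> =
     mexp (cscale (- \<i> * complex_of_real \<theta>) H) ** \<rho> ** mexp (cscale (\<i> * complex_of_real \<theta>) H)"

text \<open>Super-fidelity G(rho,sigma) = Tr[rho sigma] + sqrt((1-Tr rho^2)(1-Tr sigma^2)).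
 The traces are real for Hermitian arguments; we take real parts.\<close>
definition super_fidelity :: "complex^'n^'n \<Rightarrow> complex^'n^'n \<Rightarrow> real" where
  "super_fidelity \<rho> \<sigma> = Re (trace (\<rho> ** \<sigma>)) +
     sqrt ((1 - Re (trace (\<rho> ** \<rho>))) * (1 - Re (trace (\<sigma> ** \<sigma>))))"

definition D_HS :: "complex^'n^'n \<Rightarrow> complex^'n^'n \<Rightarrow> real" where
  "D_HS A B = Re (trace ((A - B) ** (A - B)))"

text \<open>The quotient whose limit (delta -> 0) defines the sub-QFI at theta.\<close>
definition subQFI_quot :: "(real \<Rightarrow> complex^'n^'n) \<Rightarrow> real \<Rightarrow> real \<Rightarrow> real" where
  "subQFI_quot \<rho>f \<theta> \<delta> = 8 * (1 - sqrt (super_fidelity (\<rho>f \<theta>) (\<rho>f (\<theta> + \<delta>)))) / \<delta>^2"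

end

theory Submission
  imports Defs
begin

typedef (overloaded) ('n::finite) op = "UNIV :: ((complex^'n) \<Rightarrow>\<^sub>L (complex^'n)) set"
  morphisms rep_op Abs_op by simp

setup_lifting type_definition_op

instantiation op :: (finite) real_normed_algebra_1
begin
lift_definition zero_op :: "'a op" is 0 .
lift_definition one_op :: "'a op" is id_blinfun .
lift_definition plus_op :: "'a op \<Rightarrow> 'a op \<Rightarrow> 'a op" is "(+)" .
lift_definition minus_op :: "'a op \<Rightarrow> 'a op \<Rightarrow> 'a op" is "(-)" .
lift_definition uminus_op :: "'a op \<Rightarrow> 'a op" is "uminus" .
lift_definition times_op :: "'a op \<Rightarrow> 'a op \<Rightarrow> 'a op" is "(o\<^sub>L)" .
lift_definition scaleR_op :: "real \<Rightarrow> 'a op \<Rightarrow> 'a op" is "scaleR" .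
lift_definition norm_op :: "'a op \<Rightarrow> real" is norm .
definition dist_op :: "'a op \<Rightarrow> 'a op \<Rightarrow> real"
  where "dist_op a b = norm (a - b)"
definition sgn_op :: "'a op \<Rightarrow> 'a op"
  where "sgn_op x = scaleR (inverse (norm x)) x"
definition uniformity_op :: "('a op \<times> 'a op) filter"
  where "uniformity_op = (INF e\<in>{0 <..}. principal {(x, y). dist x y < e})"
definition open_op :: "'a op set \<Rightarrow> bool"
  where "open_op S = (\<forall>x\<in>S. \<forall>\<^sub>F (x', y) in uniformity. x' = x \<longrightarrow> y \<in> S)"
instance
  apply standard
  unfolding dist_op_def open_op_def sgn_op_def uniformity_op_def
                      apply (rule refl | transfer; force simp: algebra_simps blinfun.bilinear_simps norm_triangle_ineq
     intro!: blinfun_eqI norm_blinfun_compose)+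
  apply transfer
  apply (metis norm_blinfun_id norm_zero zero_neq_one)
  apply (rule refl)+
  apply (transfer; simp add: norm_triangle_ineq norm_blinfun_compose)+
  done
end

instance op :: (finite) banach
proof
  fix X :: "nat \<Rightarrow> ('n::finite) op"
  assume "Cauchy X"
  then have "Cauchy (\<lambda>k. rep_op (X k))"
    unfolding Cauchy_iff by (simp add: norm_op.rep_eq minus_op.rep_eq)
  then obtain L where "(\<lambda>k. rep_op (X k)) \<longlonglongrightarrow> L"
    using Cauchy_convergent convergent_def by blast
  then have "X \<longlonglongrightarrow> Abs_op L"
    unfolding LIMSEQ_iff by (simp add: norm_op.rep_eq minus_op.rep_eq Abs_op_inverse)
  then show "convergent X" unfolding convergent_def by blast
qed

definition phi :: "complex^'n^'n \<Rightarrow> ('n::finite) op" where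
  "phi A = Abs_op (Blinfun (\<lambda>x. A *v x))"

definition bmat :: "('n::finite) op \<Rightarrow> complex^'n^'n" where
  "bmat X = (\<chi> i j. (blinfun_apply (rep_op X) (axis j 1)) $ i)"

lemma phi_apply[simp]: "blinfun_apply (rep_op (phi A)) x = A *v x"
  unfolding phi_def
  by (simp add: Abs_op_inverse bounded_linear_Blinfun_apply matrix_vector_mul_bounded_linear)

lemma bmat_phi[simp]: "bmat (phi A) = A"
  unfolding bmat_def
  by (simp add: vec_eq_iff matrix_vector_mult_def axis_def if_distrib cong: if_cong)

lemma phi_inj: "phi A = phi B \<Longrightarrow> A = B"
  by (metis bmat_phi)

lemma op_eqI: "(\<And>x. blinfun_apply (rep_op X) x = blinfun_apply (rep_op Y) x) \<Longrightarrow> X = Y"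
  by (metis blinfun_eqI rep_op_inject)

lemma phi_mult: "phi (A ** B) = phi A * phi B"
  by (rule op_eqI) (simp add: times_op.rep_eq matrix_vector_mul_assoc)

lemma phi_one: "phi (mat 1) = 1"
  by (rule op_eqI) (simp add: one_op.rep_eq)

lemma phi_mpow: "phi (mpow A k) = (phi A) ^ k"
  by (induction k) (simp_all add: phi_one phi_mult)

lemma phi_scaleR: "phi (r *\<^sub>R A) = r *\<^sub>R phi A"
  by (rule op_eqI) (simp add: blinfun.bilinear_simps scaleR_op.rep_eq vec_eq_iff matrix_vector_mult_def scaleR_sum_right)

lemma phi_add: "phi (A + B) = phi A + phi B"
  by (rule op_eqI) (simp add: blinfun.bilinear_simps plus_op.rep_eq vec_eq_iff matrix_vector_mult_def sum.distrib algebra_simps)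

lemma phi_diff: "phi (A - B) = phi A - phi B"
  by (rule op_eqI) (simp add: blinfun.bilinear_simps minus_op.rep_eq vec_eq_iff matrix_vector_mult_def sum_subtractf algebra_simps)

lemma phi_uminus: "phi (- A) = - phi A"
  by (rule op_eqI) (simp add: blinfun.bilinear_simps uminus_op.rep_eq vec_eq_iff matrix_vector_mult_def sum_negf)

lemma bounded_linear_rep_op: "bounded_linear rep_op"
  apply (rule bounded_linear_intro[where K=1])
  apply (simp_all add: plus_op.rep_eq scaleR_op.rep_eq norm_op.rep_eq)
  done

lemma bounded_linear_rep_op_apply: "bounded_linear (\<lambda>X. blinfun_apply (rep_op X) y)"
  by (rule bounded_linear_compose[OF blinfun.bounded_linear_left bounded_linear_rep_op])

lemma bounded_linear_vec_lambda2:
  assumes "\<And>i. bounded_linear (f i)"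
  shows "bounded_linear (\<lambda>x. \<chi> i. f i x)"
proof -
  obtain K where K: "\<And>i x. norm (f i x) \<le> norm x * K i"
    using bounded_linear.bounded[OF assms] by metis
  show ?thesis
  proof (rule bounded_linear_intro[where K="\<Sum>i\<in>UNIV. K i"])
    show "(\<chi> i. f i (x + y)) = (\<chi> i. f i x) + (\<chi> i. f i y)" for x y
      by (simp add: vec_eq_iff linear_simps(1)[OF assms])
    show "(\<chi> i. f i (r *\<^sub>R x)) = r *\<^sub>R (\<chi> i. f i x)" for r x
      by (simp add: vec_eq_iff linear_simps(5)[OF assms])
    show "norm (\<chi> i. f i x) \<le> norm x * (\<Sum>i\<in>UNIV. K i)" for x
    proof -
      have "norm (\<chi> i. f i x) \<le> (\<Sum>i\<in>UNIV. norm (f i x))"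
        unfolding norm_vec_def by (simp add: L2_set_le_sum)
      also have "\<dots> \<le> (\<Sum>i\<in>UNIV. norm x * K i)"
        by (rule sum_mono) (rule K)
      finally show ?thesis by (simp add: sum_distrib_left)
    qed
  qed
qed

lemma bounded_linear_bmat: "bounded_linear bmat"
  unfolding bmat_def
  apply (rule bounded_linear_vec_lambda2)+
  apply (rule bounded_linear_compose[OF bounded_linear_vec_nth bounded_linear_rep_op_apply])
  done

lemma bounded_linear_mvec: "bounded_linear (\<lambda>M::complex^'n^'n. M *v y)"
proof -
  have e: "(\<lambda>M::complex^'n^'n. M *v y) = (\<lambda>M. \<chi> i. \<Sum>j\<in>UNIV. (M$i$j) * y$j)"
    by (simp add: matrix_vector_mult_def fun_eq_iff)
  have "bounded_linear (\<lambda>M::complex^'n^'n. M$i$j)" for i j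
    by (rule bounded_linear_compose[OF bounded_linear_vec_nth bounded_linear_vec_nth])
  then have "bounded_linear (\<lambda>M::complex^'n^'n. (M$i$j) * y$j)" for i j
    by (rule bounded_linear_compose[OF bounded_linear_mult_left])
  then show ?thesis unfolding e
    by (intro bounded_linear_vec_lambda2 bounded_linear_sum) simp
qed

lemma phi_term: "(phi A)^k /\<^sub>R fact k = phi ((1 / fact k :: real) *\<^sub>R mpow A k)"
  by (simp add: phi_scaleR phi_mpow divide_inverse)

lemma mexp_sums: "(\<lambda>k. (1 / fact k :: real) *\<^sub>R mpow A k) sums bmat (exp (phi A))"
proof -
  have "(\<lambda>k. (phi A)^k /\<^sub>R fact k) sums exp (phi A)"
    by (simp add: exp_def summable_exp_generic summable_sums)
  from bounded_linear.sums[OF bounded_linear_bmat this] show ?thesis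
    by (simp add: phi_term)
qed

lemma mexp_eq: "mexp A = bmat (exp (phi A))"
  unfolding mexp_def using mexp_sums sums_unique by metis

lemma phi_mexp: "phi (mexp A) = exp (phi A)"
proof (rule op_eqI)
  fix y
  have 1: "(\<lambda>k. ((1 / fact k :: real) *\<^sub>R mpow A k) *v y) sums (mexp A *v y)"
    unfolding mexp_eq by (rule bounded_linear.sums[OF bounded_linear_mvec mexp_sums])
  have "(\<lambda>k. (phi A)^k /\<^sub>R fact k) sums exp (phi A)"
    by (simp add: exp_def summable_exp_generic summable_sums)
  from bounded_linear.sums[OF bounded_linear_rep_op_apply this, of y]
  have 2: "(\<lambda>k. ((1 / fact k :: real) *\<^sub>R mpow A k) *v y) sums blinfun_apply (rep_op (exp (phi A))) y"
    by (simp add: phi_term)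
  show "blinfun_apply (rep_op (phi (mexp A))) y = blinfun_apply (rep_op (exp (phi A))) y"
    using sums_unique2[OF 1 2] by (simp only: phi_apply)
qed

lemma cscale_neg: "cscale (- \<i> * complex_of_real s) H = s *\<^sub>R cscale (- \<i>) H"
  by (simp add: cscale_def vec_eq_iff scaleR_conv_of_real[where 'a=complex])

lemma cscale_pos: "cscale (\<i> * complex_of_real s) H = s *\<^sub>R (- cscale (- \<i>) H)"
  by (simp add: cscale_def vec_eq_iff scaleR_conv_of_real[where 'a=complex])

definition Uop :: "complex^'n^'n \<Rightarrow> real \<Rightarrow> complex^'n^'n" where
  "Uop H s = mexp (cscale (- \<i> * complex_of_real s) H)"
definition Vop :: "complex^'n^'n \<Rightarrow> real \<Rightarrow> complex^'n^'n" where
  "Vop H s = mexp (cscale (\<i> * complex_of_real s) H)"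

lemma phiU: "phi (Uop H s) = exp (s *\<^sub>R phi (cscale (- \<i>) H))"
  unfolding Uop_def cscale_neg by (simp add: phi_mexp phi_scaleR)

lemma phiV: "phi (Vop H s) = exp (s *\<^sub>R (- phi (cscale (- \<i>) H)))"
  unfolding Vop_def cscale_pos by (simp add: phi_mexp phi_scaleR phi_uminus)

lemma VU: "Vop H s ** Uop H s = mat 1"
proof (rule phi_inj)
  show "phi (Vop H s ** Uop H s) = phi (mat 1)"
    unfolding phi_mult phiU phiV phi_one
    using exp_minus_inverse[of "- (s *\<^sub>R phi (cscale (- \<i>) H))"] by simp
qed

lemma VU': "Vop H s ** (Uop H s ** X) = X"
  by (simp add: matrix_mul_assoc VU)

lemma Uadd: "Uop H (a + b) = Uop H a ** Uop H b"
proof (rule phi_inj)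
  let ?K = "phi (cscale (- \<i>) H)"
  have "exp ((a + b) *\<^sub>R ?K) = exp (a *\<^sub>R ?K + b *\<^sub>R ?K)" by (simp add: scaleR_add_left)
  also have "\<dots> = exp (a *\<^sub>R ?K) * exp (b *\<^sub>R ?K)"
    by (rule exp_add_commuting) (simp add: scaleR_scaleR mult.commute)
  finally show "phi (Uop H (a + b)) = phi (Uop H a ** Uop H b)"
    unfolding phi_mult phiU .
qed

lemma Vadd: "Vop H (a + b) = Vop H b ** Vop H a"
proof (rule phi_inj)
  let ?K = "- phi (cscale (- \<i>) H)"
  have "exp ((a + b) *\<^sub>R ?K) = exp (b *\<^sub>R ?K + a *\<^sub>R ?K)" by (simp add: scaleR_add_left add.commute)
  also have "\<dots> = exp (b *\<^sub>R ?K) * exp (a *\<^sub>R ?K)"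
    by (rule exp_add_commuting) (simp add: scaleR_scaleR mult.commute)
  finally show "phi (Vop H (a + b)) = phi (Vop H b ** Vop H a)"
    unfolding phi_mult phiV .
qed

lemma U0: "Uop H 0 = mat 1"
  by (rule phi_inj) (simp add: phiU phi_one)
lemma V0: "Vop H 0 = mat 1"
  by (rule phi_inj) (simp add: phiV phi_one)

lemma rot_eq: "rot_state \<rho> H s = Uop H s ** \<rho> ** Vop H s"
  by (simp add: rot_state_def Uop_def Vop_def)

lemma conj_trace: "trace (Uop H s ** X ** Vop H s) = trace X"
  by (metis VU matrix_mul_assoc matrix_mul_lid trace_mul_sym)

lemma rot0: "rot_state \<rho> H 0 = \<rho>"
  by (simp add: rot_eq U0 V0)

lemma tr_sq: "trace (rot_state \<rho> H s ** rot_state \<rho> H s) = trace (\<rho> ** \<rho>)"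
proof -
  have "rot_state \<rho> H s ** rot_state \<rho> H s = Uop H s ** (\<rho> ** \<rho>) ** Vop H s"
    by (simp add: rot_eq matrix_mul_assoc[symmetric] VU')
  then show ?thesis by (simp add: conj_trace)
qed

lemma tr_cross: "trace (rot_state \<rho> H t ** rot_state \<rho> H (t + d)) = trace (\<rho> ** rot_state \<rho> H d)"
proof -
  have "rot_state \<rho> H t ** rot_state \<rho> H (t + d) = Uop H t ** (\<rho> ** rot_state \<rho> H d) ** Vop H t"
    by (simp add: rot_eq Uadd Vadd matrix_mul_assoc[symmetric] VU')
  then show ?thesis by (simp add: conj_trace)
qed

lemma matrix_diff_ldistrib': "(A::complex^'n^'n) ** (B - C) = A ** B - A ** C"
  by (simp add: vec_eq_iff matrix_matrix_mult_def sum_subtractf algebra_simps)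
lemma matrix_diff_rdistrib': "((A::complex^'n^'n) - B) ** C = A ** C - B ** C"
  by (simp add: vec_eq_iff matrix_matrix_mult_def sum_subtractf algebra_simps)
lemma trace_diff': "trace ((A::complex^'n^'n) - B) = trace A - trace B"
  by (simp add: trace_def sum_subtractf)

lemma D_HS_eq: "D_HS \<rho> (rot_state \<rho> H s) = 2 * Re (trace (\<rho> ** \<rho>)) - 2 * Re (trace (\<rho> ** rot_state \<rho> H s))"
proof -
  let ?R = "rot_state \<rho> H s"
  have "trace ((\<rho> - ?R) ** (\<rho> - ?R)) = trace (\<rho> ** \<rho>) - trace (\<rho> ** ?R) - trace (?R ** \<rho>) + trace (?R ** ?R)"
    by (simp add: matrix_diff_ldistrib' matrix_diff_rdistrib' trace_diff')
  also have "\<dots> = 2 * trace (\<rho> ** \<rho>) - 2 * trace (\<rho> ** ?R)"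
    by (simp add: tr_sq trace_mul_sym[of ?R \<rho>])
  finally show ?thesis unfolding D_HS_def by simp
qed

lemma sum_two_pts:
  fixes f :: "'n::finite \<Rightarrow> complex"
  shows "(\<Sum>l\<in>UNIV. f l * ((if l = i then a else 0) + (if l = j then b else 0))) = f i * a + f j * b"
proof -
  have e: "f l * ((if l = i then a else 0) + (if l = j then b else 0)) = (if l = i then f l * a else 0) + (if l = j then f l * b else 0)" for l
    by (simp add: distrib_left)
  have "(\<Sum>l\<in>UNIV. f l * ((if l = i then a else 0) + (if l = j then b else 0)))
     = (\<Sum>l\<in>UNIV. (if l = i then f l * a else 0)) + (\<Sum>l\<in>UNIV. (if l = j then f l * b else 0))"
    unfolding e by (rule sum.distrib)
  also have "\<dots> = f i * a + f j * b" by (simp add: sum.delta)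
  finally show ?thesis .
qed

lemma qf_pair:
  fixes A :: "complex^'n^'n" and i j :: 'n and a b :: complex
  defines "v \<equiv> (\<chi> k. (if k = i then a else 0) + (if k = j then b else 0)) :: complex^'n"
  shows "(\<Sum>k\<in>UNIV. \<Sum>l\<in>UNIV. cnj (v $ k) * A $ k $ l * v $ l) =
    cnj a * A$i$i * a + cnj a * A$i$j * b + cnj b * A$j$i * a + cnj b * A$j$j * b"
proof -
  have inner: "(\<Sum>l\<in>UNIV. cnj (v $ k) * A $ k $ l * v $ l) = (A$k$i * a + A$k$j * b) * cnj (v $ k)" for k
  proof -
    have "(\<Sum>l\<in>UNIV. cnj (v $ k) * A $ k $ l * v $ l) = cnj (v $ k) * (\<Sum>l\<in>UNIV. A $ k $ l * v $ l)"
      by (simp add: sum_distrib_left mult.assoc)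
    also have "(\<Sum>l\<in>UNIV. A $ k $ l * v $ l) = A$k$i * a + A$k$j * b"
      unfolding v_def vec_lambda_beta by (rule sum_two_pts)
    finally show ?thesis by (simp add: mult.commute)
  qed
  have cv: "cnj (v $ k) = (if k = i then cnj a else 0) + (if k = j then cnj b else 0)" for k
    by (simp add: v_def)
  have "(\<Sum>k\<in>UNIV. \<Sum>l\<in>UNIV. cnj (v $ k) * A $ k $ l * v $ l)
      = (\<Sum>k\<in>UNIV. (A$k$i * a + A$k$j * b) * cnj (v $ k))"
    by (simp only: inner)
  also have "\<dots> = (\<Sum>k\<in>UNIV. (A$k$i * a + A$k$j * b) * ((if k = i then cnj a else 0) + (if k = j then cnj b else 0)))"
    by (simp only: cv)
  also have "\<dots> = (A$i$i * a + A$i$j * b) * cnj a + (A$j$i * a + A$j$j * b) * cnj b"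
    by (rule sum_two_pts)
  finally show ?thesis by (simp add: algebra_simps)
qed

lemma herm_entry: "hermitian A \<Longrightarrow> A $ j $ i = cnj (A $ i $ j)"
  unfolding hermitian_def cmat_adj_def by (metis vec_lambda_beta)

lemma real_minor:
  fixes di dj c :: real
  assumes Q: "\<And>\<alpha> \<beta>. 0 \<le> \<alpha>^2 * di - 2 * \<alpha> * \<beta> * c + \<beta>^2 * c * dj"
    and "0 \<le> dj" "0 \<le> c"
  shows "c \<le> di * dj"
proof (cases "dj = 0")
  case True
  show ?thesis
  proof (rule ccontr)
    assume "\<not> c \<le> di * dj"
    then have c: "c > 0" using True by simp
    have "0 \<le> 1^2 * di - 2 * 1 * ((di + 1) / c) * c + ((di+1)/c)^2 * c * dj" by (rule Q)
    also have "\<dots> = - di - 2" using c True by (simp add: field_simps)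
    finally have "di \<le> -2" by simp
    moreover have "0 \<le> di" using Q[of 1 0] by simp
    ultimately show False by simp
  qed
next
  case False
  then have "dj > 0" using assms by simp
  have "0 \<le> dj^2 * di - 2 * dj * 1 * c + 1^2 * c * dj" by (rule Q)
  also have "\<dots> = dj * (di * dj - c)" by (simp add: algebra_simps power2_eq_square)
  finally show ?thesis using \<open>dj > 0\<close> by (simp add: zero_le_mult_iff)
qed

lemma re4: "Re (cnj (complex_of_real a) * p * complex_of_real a
        + cnj (complex_of_real a) * z * (- complex_of_real b * cnj z)
        + cnj (- complex_of_real b * cnj z) * cnj z * complex_of_real a
        + cnj (- complex_of_real b * cnj z) * q * (- complex_of_real b * cnj z))
   = a^2 * Re p - 2 * a * b * ((Re z)^2 + (Im z)^2) + b^2 * ((Re z)^2 + (Im z)^2) * Re q"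
proof -
  have zz: "z * cnj z = complex_of_real ((Re z)^2 + (Im z)^2)" by (rule complex_mult_cnj)
  have "cnj (complex_of_real a) * p * complex_of_real a
        + cnj (complex_of_real a) * z * (- complex_of_real b * cnj z)
        + cnj (- complex_of_real b * cnj z) * cnj z * complex_of_real a
        + cnj (- complex_of_real b * cnj z) * q * (- complex_of_real b * cnj z)
      = complex_of_real (a^2) * p - complex_of_real (2 * a * b) * (z * cnj z) + complex_of_real (b^2) * (z * cnj z) * q"
    by (simp add: algebra_simps power2_eq_square)
  also have "\<dots> = complex_of_real (a^2) * p - complex_of_real (2 * a * b * ((Re z)^2 + (Im z)^2)) + complex_of_real (b^2 * ((Re z)^2 + (Im z)^2)) * q"
    unfolding zz by (simp add: algebra_simps)
  finally show ?thesis by simp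
qed

lemma purity_le_1:
  fixes \<rho> :: "complex^'n^'n"
  assumes "density_operator \<rho>"
  shows "Re (trace (\<rho> ** \<rho>)) \<le> 1"
proof -
  have herm: "hermitian \<rho>" and psd: "\<And>v::complex^'n. 0 \<le> Re (\<Sum>i\<in>UNIV. \<Sum>j\<in>UNIV. cnj (v $ i) * \<rho> $ i $ j * v $ j)"
    and tr: "trace \<rho> = 1"
    using assms unfolding density_operator_def positive_semidef_def by auto
  define d where "d i = Re (\<rho> $ i $ i)" for i
  define c where "c i j = (Re (\<rho>$i$j))^2 + (Im (\<rho>$i$j))^2" for i j
  have Qf: "0 \<le> \<alpha>^2 * d i - 2 * \<alpha> * \<beta> * c i j + \<beta>^2 * c i j * d j" for i j \<alpha> \<beta>
  proof -
    have "0 \<le> Re (cnj (complex_of_real \<alpha>) * \<rho>$i$i * complex_of_real \<alpha>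
        + cnj (complex_of_real \<alpha>) * \<rho>$i$j * (- complex_of_real \<beta> * cnj (\<rho>$i$j))
        + cnj (- complex_of_real \<beta> * cnj (\<rho>$i$j)) * \<rho>$j$i * complex_of_real \<alpha>
        + cnj (- complex_of_real \<beta> * cnj (\<rho>$i$j)) * \<rho>$j$j * (- complex_of_real \<beta> * cnj (\<rho>$i$j)))"
      using psd[of "\<chi> k. (if k = i then complex_of_real \<alpha> else 0) + (if k = j then - complex_of_real \<beta> * cnj (\<rho>$i$j) else 0)"]
      by (simp only: qf_pair)
    also have "\<dots> = \<alpha>^2 * d i - 2 * \<alpha> * \<beta> * c i j + \<beta>^2 * c i j * d j"
      unfolding herm_entry[OF herm, where i=i and j=j] d_def c_def by (rule re4)
    finally show ?thesis .
  qed
  have dnn: "0 \<le> d i" for i using Qf[where \<alpha>=1 and \<beta>=0 and j=i and i=i] by simp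
  have cnn: "0 \<le> c i j" for i j unfolding c_def by simp
  have cle: "c i j \<le> d i * d j" for i j
    by (rule real_minor[OF Qf dnn cnn])
  have s1: "(\<Sum>i\<in>UNIV. d i) = 1"
  proof -
    have "(\<Sum>i\<in>UNIV. d i) = Re (trace \<rho>)" by (simp add: trace_def d_def Re_sum)
    then show ?thesis using tr by simp
  qed
  have "Re (trace (\<rho> ** \<rho>)) = (\<Sum>i\<in>UNIV. \<Sum>j\<in>UNIV. c i j)"
  proof -
    have e: "Re (\<rho>$i$k * \<rho>$k$i) = c i k" for i k
      unfolding herm_entry[OF herm, where i=i and j=k] c_def by (simp add: power2_eq_square)
    show ?thesis by (simp only: trace_def matrix_matrix_mult_def vec_lambda_beta Re_sum e)
  qed
  also have "\<dots> \<le> (\<Sum>i\<in>UNIV. \<Sum>j\<in>UNIV. d i * d j)"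
    by (intro sum_mono cle)
  also have "\<dots> = (\<Sum>i\<in>UNIV. d i) * (\<Sum>j\<in>UNIV. d j)"
    by (rule sum_product[symmetric])
  also have "\<dots> = 1" using s1 by simp
  finally show ?thesis .
qed

definition trf :: "('n::finite) op \<Rightarrow> real" where
  "trf X = Re (trace (bmat X))"

lemma bounded_linear_trace: "bounded_linear (trace :: complex^'n^'n \<Rightarrow> complex)"
proof -
  have "bounded_linear (\<lambda>M::complex^'n^'n. M$i$i)" for i
    by (rule bounded_linear_compose[OF bounded_linear_vec_nth bounded_linear_vec_nth])
  then have "bounded_linear (\<lambda>M::complex^'n^'n. \<Sum>i\<in>UNIV. M$i$i)"
    by (intro bounded_linear_sum) auto
  then show ?thesis unfolding trace_def[abs_def] .
qed

lemma bounded_linear_trf: "bounded_linear trf"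
  unfolding trf_def[abs_def]
  by (intro bounded_linear_compose[OF bounded_linear_Re] bounded_linear_compose[OF bounded_linear_trace] bounded_linear_bmat)

lemma trf_phi: "trf (phi M) = Re (trace M)"
  by (simp add: trf_def)

lemma trf_deriv:
  assumes "(g has_vector_derivative G) (at t)"
  shows "((\<lambda>s. trf (g s)) has_real_derivative trf G) (at t)"
  unfolding has_real_derivative_iff_has_vector_derivative
  by (rule bounded_linear.has_vector_derivative[OF bounded_linear_trf assms])

lemma g_deriv:
  fixes P K :: "('n::finite) op"
  shows "((\<lambda>s. P * (exp (s *\<^sub>R K) * P * exp (s *\<^sub>R (- K)))) has_vector_derivative
     P * ((exp (t *\<^sub>R K) * K) * P * exp (t *\<^sub>R (- K)) + exp (t *\<^sub>R K) * P * (exp (t *\<^sub>R (- K)) * (- K)))) (at t)"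
  apply (rule has_vector_derivative_eq_rhs)
   apply (rule has_vector_derivative_mult_right)
   apply (rule has_vector_derivative_mult)
    apply (rule has_vector_derivative_mult_left)
    apply (rule exp_scaleR_has_vector_derivative_right)
   apply (rule exp_scaleR_has_vector_derivative_right)
  apply (simp add: algebra_simps)
  done

lemma g'_deriv:
  fixes P K :: "('n::finite) op"
  shows "\<exists>G2. ((\<lambda>t. P * ((exp (t *\<^sub>R K) * K) * P * exp (t *\<^sub>R (- K)) + exp (t *\<^sub>R K) * P * (exp (t *\<^sub>R (- K)) * (- K)))) has_vector_derivative G2) (at 0)"
  apply (rule exI)
  apply (rule has_vector_derivative_mult_right)
  apply (rule has_vector_derivative_add)
   apply (rule has_vector_derivative_mult)
    apply (rule has_vector_derivative_mult_left)
    apply (rule has_vector_derivative_mult_left)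
    apply (rule exp_scaleR_has_vector_derivative_right)
   apply (rule exp_scaleR_has_vector_derivative_right)
  apply (rule has_vector_derivative_mult)
   apply (rule has_vector_derivative_mult_left)
   apply (rule exp_scaleR_has_vector_derivative_right)
  apply (rule has_vector_derivative_mult_left)
  apply (rule exp_scaleR_has_vector_derivative_right)
  done

lemma quot_alg:
  fixes x d :: real
  assumes "0 \<le> x" "d \<noteq> 0"
  shows "8 * (1 - sqrt x) / d^2 = - 8 * ((x - 1) / d^2) / (1 + sqrt x)"
proof -
  have s: "sqrt x * sqrt x = x" using assms(1) by simp
  have p: "1 + sqrt x > 0" using real_sqrt_ge_zero[OF assms(1)] by linarith
  have "(1 - sqrt x) * (1 + sqrt x) = 1 - x" using s by (simp add: algebra_simps)
  then have e: "1 - sqrt x = (1 - x) / (1 + sqrt x)" using p by (simp add: field_simps)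
  show ?thesis unfolding e using p assms(2) by (simp add: field_simps)
qed

theorem proposition2:
  fixes \<rho> H :: "complex^'n^'n" and \<theta> :: real
  assumes "density_operator \<rho>"
    and "hermitian H"
  shows "\<exists>L D'.
           (\<forall>t. ((\<lambda>s. D_HS \<rho> (rot_state \<rho> H s)) has_real_derivative D' t) (at t))
         \<and> (D' has_real_derivative L) (at 0)
         \<and> (subQFI_quot (rot_state \<rho> H) \<theta> \<longlongrightarrow> L) (at 0)"
proof -
  define K where "K = phi (cscale (- \<i>) H)"
  define P where "P = phi \<rho>"
  define g where "g s = P * (exp (s *\<^sub>R K) * P * exp (s *\<^sub>R (- K)))" for s
  define g' where "g' t = P * ((exp (t *\<^sub>R K) * K) * P * exp (t *\<^sub>R (- K)) + exp (t *\<^sub>R K) * P * (exp (t *\<^sub>R (- K)) * (- K)))" for t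
  define p where "p = Re (trace (\<rho> ** \<rho>))"
  define f where "f s = Re (trace (\<rho> ** rot_state \<rho> H s))" for s
  define f' where "f' t = trf (g' t)" for t
  have p1: "p \<le> 1" unfolding p_def by (rule purity_le_1[OF assms(1)])
  have fg: "f s = trf (g s)" for s
  proof -
    have "phi (\<rho> ** rot_state \<rho> H s) = g s"
      unfolding rot_eq g_def phi_mult phiU phiV K_def P_def ..
    then show ?thesis unfolding f_def by (metis trf_phi)
  qed
  have gd: "(g has_vector_derivative g' t) (at t)" for t
    unfolding g_def[abs_def] g'_def by (rule g_deriv)
  obtain G2 where G2: "(g' has_vector_derivative G2) (at 0)"
    using g'_deriv[of P K] unfolding g'_def[symmetric] by blast
  have fd: "(f has_real_derivative f' t) (at t)" for t
    unfolding fg[abs_def] f'_def by (rule trf_deriv[OF gd])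
  have f'd: "(f' has_real_derivative trf G2) (at 0)"
    unfolding f'_def[abs_def] by (rule trf_deriv[OF G2])
  have f'0: "f' 0 = 0"
  proof -
    define Km where "Km = cscale (- \<i>) H"
    have "g' 0 = phi (\<rho> ** (Km ** \<rho>) - \<rho> ** (\<rho> ** Km))"
      unfolding g'_def phi_diff phi_mult P_def K_def Km_def by (simp add: algebra_simps)
    moreover have "trace (\<rho> ** (Km ** \<rho>)) = trace (\<rho> ** (\<rho> ** Km))"
      by (metis matrix_mul_assoc trace_mul_sym)
    ultimately show ?thesis unfolding f'_def by (simp add: trf_phi trace_diff')
  qed
  have f0: "f 0 = p" unfolding f_def p_def by (simp add: rot0)
  have Deq: "D_HS \<rho> (rot_state \<rho> H s) = 2 * p - 2 * f s" for s
    unfolding D_HS_eq p_def f_def ..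
  define D' where "D' t = - 2 * f' t" for t
  define L where "L = - 2 * trf G2"
  have A: "((\<lambda>s. D_HS \<rho> (rot_state \<rho> H s)) has_real_derivative D' t) (at t)" for t
    unfolding Deq D'_def
    by (rule derivative_eq_intros refl fd | simp)+
  have B: "(D' has_real_derivative L) (at 0)"
    unfolding D'_def[abs_def] L_def
    by (rule derivative_eq_intros refl f'd | simp)+
  define h where "h d = f d - p" for d
  have hd: "(h has_real_derivative f' t) (at t)" for t
    unfolding h_def[abs_def] by (rule derivative_eq_intros refl fd | simp)+
  have h0: "(h \<longlongrightarrow> 0) (at 0)"
  proof -
    have "isCont h 0" by (rule DERIV_isCont[OF hd])
    then show ?thesis by (simp add: isCont_def h_def f0)
  qed
  have hq: "((\<lambda>d. h d / d^2) \<longlongrightarrow> trf G2 / 2) (at 0)"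
  proof (rule lhopital[where f' = f' and g' = "\<lambda>x. 2 * x"])
    show "(h \<longlongrightarrow> 0) (at 0)" by (rule h0)
    show "((\<lambda>d::real. d^2) \<longlongrightarrow> 0) (at 0)" by (auto intro!: tendsto_eq_intros)
    show "\<forall>\<^sub>F x in at 0. (x::real)^2 \<noteq> 0" by (simp add: eventually_at_filter)
    show "\<forall>\<^sub>F x in at 0. 2 * (x::real) \<noteq> 0" by (simp add: eventually_at_filter)
    show "\<forall>\<^sub>F x in at 0. (h has_real_derivative f' x) (at x)" by (simp add: hd)
    have sq: "((\<lambda>d. d^2) has_real_derivative 2 * x) (at x)" for x :: real
      by (rule derivative_eq_intros refl | simp)+
    show "\<forall>\<^sub>F x in at 0. ((\<lambda>d. d^2) has_real_derivative 2 * x) (at x)"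
      using sq by simp
    have "((\<lambda>y. (f' y - f' 0) / (y - 0)) \<longlongrightarrow> trf G2) (at 0)"
      using f'd by (simp add: has_field_derivative_iff)
    then have "((\<lambda>y. f' y / y) \<longlongrightarrow> trf G2) (at 0)" by (simp add: f'0)
    then have "((\<lambda>y. (f' y / y) / 2) \<longlongrightarrow> trf G2 / 2) (at 0)"
      by (rule tendsto_divide) simp_all
    then show "((\<lambda>y. f' y / (2 * y)) \<longlongrightarrow> trf G2 / 2) (at 0)"
      by (simp add: field_simps)
  qed
  have Geq: "super_fidelity (rot_state \<rho> H \<theta>) (rot_state \<rho> H (\<theta> + d)) = 1 + h d" for d
  proof -
    have "sqrt ((1 - p) * (1 - p)) = 1 - p" using p1 by simp
    then show ?thesis
      unfolding super_fidelity_def tr_cross tr_sq h_def f_def p_def[symmetric] by simp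
  qed
  have ev: "\<forall>\<^sub>F d in at 0. subQFI_quot (rot_state \<rho> H) \<theta> d = - 8 * (h d / d^2) / (1 + sqrt (1 + h d))"
  proof -
    have "\<forall>\<^sub>F d in at 0. h d > -1"
      using h0 by (rule order_tendstoD) simp
    moreover have "\<forall>\<^sub>F d in at (0::real). d \<noteq> 0" by (simp add: eventually_at_filter)
    ultimately show ?thesis
    proof eventually_elim
      case (elim d)
      then show ?case unfolding subQFI_quot_def Geq
        using quot_alg[of "1 + h d" d] by simp
    qed
  qed
  have C: "(subQFI_quot (rot_state \<rho> H) \<theta> \<longlongrightarrow> L) (at 0)"
  proof -
    have "((\<lambda>d. - 8 * (h d / d^2) / (1 + sqrt (1 + h d))) \<longlongrightarrow> - 8 * (trf G2 / 2) / (1 + sqrt (1 + 0))) (at 0)"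
      by (intro tendsto_intros hq h0) simp
    then have "((\<lambda>d. - 8 * (h d / d^2) / (1 + sqrt (1 + h d))) \<longlongrightarrow> L) (at 0)"
      by (simp add: L_def)
    then show ?thesis using ev by (simp add: tendsto_cong)
  qed
  show ?thesis using A B C by blast
qed


end
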